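(* In the setting described in the context, equality $H(\theta)=C_\Upsilon(\theta)$ holds if and only if $\langle w_j'(\theta)|w_k(\theta)\rangle=0$ for all $j,k$ (including $j=k$) with $p_j(\theta)>0$ and $p_k(\theta)>0$.
   Context: A one-parameter quantum channel is a map $\rho_0\mapsto\sum_k E_k(\theta)\rho_0E_k(\theta)^\dagger$ on density matrices on $\mathbb{C}^d$, with Kraus operators $E_k(\theta)$ depending differentiably on a real parameter $\theta$ and $\sum_k E_k^\dagger E_k=I$. The input state is a fixed pure state $\rho_0=|\psi_0\rangle\langle\psi_0|$. The canonical Kraus operators $\{\Upsilon_k(\theta)\}_{k=1}^d$ form a differentiable Kraus representation of the same channel with $\mathrm{tr}\{\Upsilon_k\rho_0\Upsilon_j^\dagger\}=\delta_{jk}p_k(\theta)$. The output state is $\rho_{out}(\theta)=\sum_k p_k(\theta)|w_k(\theta)\rangle\langle w_k(\theta)|$, with $\{|w_k(\theta)\rangle\}$ an orthonormal basis depending differentiably on $\theta$ and $|w_k\rangle=p_k^{-1/2}\Upsilon_k|\psi_0\rangle$ when $p_k>0$. A prime denotes $d/d\theta$. $C_\Upsilon(\theta)=4\sum_k\mathrm{tr}\{\Upsilon_k'\rho_0\Upsilon_k'^\dagger\}$ (the Sarovar–Milburn bound), and $H(\theta)=\mathrm{tr}\{\rho_{out}\lambda^2\}$ is the SLD quantum information, $\lambda$ being a self-adjoint solution of $\rho_{out}'=\frac12(\rho_{out}\lambda+\lambda\rho_{out})$. *)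

theory Defs
  imports "HOL-Analysis.Analysis"
begin

text \<open>Complex d-dimensional Hilbert space: vectors complex^'n, operators complex^'n^'n,
  where the finite index type 'n has CARD('n) = d.\<close>

definition adj :: "complex^'n^'n \<Rightarrow> complex^'n^'n" where
  "adj A = (\<chi> i j. cnj (A $ j $ i))"

definition braket :: "complex^'n \<Rightarrow> complex^'n \<Rightarrow> complex" where
  "braket x y = (\<Sum>i\<in>UNIV. cnj (x $ i) * y $ i)"

definition ketbra :: "complex^'n \<Rightarrow> complex^'n \<Rightarrow> complex^'n^'n" where
  "ketbra x y = (\<chi> i j. x $ i * cnj (y $ j))"

definition density_matrix :: "complex^'n^'n \<Rightarrow> bool" where
  "density_matrix \<rho> \<longleftrightarrow> adj \<rho> = \<rho> \<and> (\<forall>x. 0 \<le> Re (braket x (\<rho> *v x))) \<and> trace \<rho> = 1"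

definition kraus_apply :: "('k::finite \<Rightarrow> complex^'n^'n) \<Rightarrow> complex^'n^'n \<Rightarrow> complex^'n^'n" where
  "kraus_apply K \<rho> = (\<Sum>k\<in>UNIV. K k ** \<rho> ** adj (K k))"

end

theory Submission
  imports Defs
begin


lemma braket_cnj: "braket y x = cnj (braket x y)"
  by (simp add: braket_def mult.commute)

lemma braket_add2: "braket x (y + z) = braket x y + braket x z"
  by (simp add: braket_def algebra_simps sum.distrib)

lemma braket_scale2: "braket x (c *s y) = c * braket x y"
  by (simp add: braket_def sum_distrib_left algebra_simps)

lemma braket_scale1: "braket (c *s x) y = cnj c * braket x y"
  by (simp add: braket_def sum_distrib_left algebra_simps)

lemma braket_sum2: "braket x (sum f S) = (\<Sum>k\<in>S. braket x (f k))"
  unfolding braket_def by (simp add: sum_component sum_distrib_left) (rule sum.swap)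

lemma braket_adj: "braket x (A *v y) = braket (adj A *v x) y"
  unfolding braket_def adj_def matrix_vector_mult_def
  by (simp add: sum_distrib_left sum_distrib_right mult.assoc mult.left_commute) (rule sum.swap)

lemma adj_adj: "adj (adj A) = A"
  by (simp add: adj_def vec_eq_iff)

lemma ketbra_mult: "A ** ketbra x y ** adj B = ketbra (A *v x) (B *v y)"
  unfolding ketbra_def adj_def matrix_matrix_mult_def matrix_vector_mult_def
  by (simp add: vec_eq_iff sum_distrib_left sum_distrib_right mult.assoc mult.left_commute mult.commute)

lemma trace_ketbra: "trace (ketbra x y) = braket y x"
  by (simp add: trace_def ketbra_def braket_def mult.commute)

lemma ketbra_vec: "ketbra a b *v c = braket b c *s a"
  by (simp add: ketbra_def braket_def matrix_vector_mult_def vec_eq_iff sum_distrib_left algebra_simps)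

lemma ketbra_mmult: "ketbra a b ** M = ketbra a (adj M *v b)"
  by (simp add: ketbra_def adj_def matrix_matrix_mult_def matrix_vector_mult_def vec_eq_iff
      sum_distrib_left algebra_simps)

lemma adj_ketbra: "adj (ketbra a b) = ketbra b a"
  by (simp add: ketbra_def adj_def vec_eq_iff)

lemma trace_sum: "trace (sum f S) = (\<Sum>k\<in>S. trace (f k))"
  unfolding trace_def by (simp add: sum_component) (rule sum.swap)

lemma trace_scaleR: "trace (r *\<^sub>R A) = complex_of_real r * trace A"
  unfolding trace_def by (simp add: sum_distrib_left) (simp add: scaleR_conv_of_real)

lemma complete:
  fixes w :: "'n \<Rightarrow> complex^'n"
  assumes on: "\<And>j k. braket (w j) (w k) = (if j = k then 1 else 0)"
  shows "x = (\<Sum>j\<in>UNIV. braket (w j) x *s w j)"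
proof -
  define W :: "complex^'n^'n" where "W = (\<chi> i j. w j $ i)"
  have "adj W ** W = mat 1"
    using on by (simp add: W_def adj_def matrix_matrix_mult_def mat_def vec_eq_iff braket_def)
  then have "W ** adj W = mat 1" by (rule matrix_left_right_inverse[THEN iffD1])
  then have "x = W *v (adj W *v x)" by (simp add: matrix_vector_mul_assoc)
  also have "\<dots> = (\<Sum>j\<in>UNIV. braket (w j) x *s w j)"
    by (simp add: W_def adj_def matrix_vector_mult_def vec_eq_iff braket_def sum_component mult.commute)
  finally show ?thesis .
qed

lemma parseval:
  fixes w :: "'n \<Rightarrow> complex^'n"
  assumes on: "\<And>j k. braket (w j) (w k) = (if j = k then 1 else 0)"
  shows "braket x y = (\<Sum>j\<in>UNIV. cnj (braket (w j) x) * braket (w j) y)"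
proof -
  have "braket x y = braket x (\<Sum>j\<in>UNIV. braket (w j) y *s w j)"
    using complete[OF on, of y] by simp
  also have "\<dots> = (\<Sum>j\<in>UNIV. cnj (braket (w j) x) * braket (w j) y)"
    by (simp add: braket_sum2 braket_scale2 mult.commute braket_cnj[of x])
  finally show ?thesis .
qed



lemma aux: assumes "(P::real) + Q > 0" shows "4*(Q+P)*X^2 - (P+Q)*(2*\<bar>P-Q\<bar>*X/(P+Q))^2 = 16*P*Q*X^2/(P+Q)"
proof -
  have "(2*\<bar>P-Q\<bar>*X/(P+Q))^2 = 4*(P-Q)^2*X^2/(P+Q)^2" by (simp add: power_divide power_mult_distrib)
  then have "(P+Q)*(2*\<bar>P-Q\<bar>*X/(P+Q))^2 = 4*(P-Q)^2*X^2/(P+Q)" using assms by (simp add: power2_eq_square)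
  moreover have "4*(Q+P)*X^2 = 4*(P+Q)^2*X^2/(P+Q)" using assms by (simp add: power2_eq_square)
  ultimately have "4*(Q+P)*X^2 - (P+Q)*(2*\<bar>P-Q\<bar>*X/(P+Q))^2 = (4*(P+Q)^2*X^2 - 4*(P-Q)^2*X^2)/(P+Q)"
    by (simp add: diff_divide_distrib)
  also have "4*(P+Q)^2*X^2 - 4*(P-Q)^2*X^2 = 16*P*Q*X^2" by (simp add: power2_eq_square algebra_simps)
  finally show ?thesis .
qed

lemma pair_off:
  fixes qj ql :: real and c a1 a2 L1 L2 :: complex
  assumes "qj \<ge> 0" "ql \<ge> 0" "a1 = - of_real ql * c" "a2 = of_real qj * cnj c"
    and "of_real ((qj^2+ql^2)/2) * L1 = a1 * of_real ql + of_real qj * cnj a2"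
    and "cmod L2 = cmod L1"
  shows "4*cmod a1^2 + 4*cmod a2^2 - ql^2*cmod L1^2 - qj^2*cmod L2^2
         = (if qj^2+ql^2 = 0 then 0 else 16*qj^2*ql^2*cmod c^2/(qj^2+ql^2))"
proof -
  have e: "of_real ((qj^2+ql^2)/2) * L1 = of_real (qj^2 - ql^2) * c"
    using assms(3-5) by (simp add: algebra_simps power2_eq_square)
  have m: "((qj^2+ql^2)/2) * cmod L1 = \<bar>qj^2 - ql^2\<bar> * cmod c"
    using arg_cong[OF e, of cmod] by (simp only: norm_mult norm_of_real) (simp add: abs_of_nonneg)
  have ca1: "cmod a1 = ql * cmod c" using assms(2,3) by (simp add: norm_mult)
  have ca2: "cmod a2 = qj * cmod c" using assms(1,4) by (simp add: norm_mult)
  show ?thesis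
  proof (cases "qj^2+ql^2 = 0")
    case True
    then have "qj = 0" "ql = 0" using assms(1,2) by (auto simp: add_nonneg_eq_0_iff)
    then show ?thesis using ca1 ca2 by simp
  next
    case False
    then have pos: "qj^2+ql^2 > 0" by (simp add: add_nonneg_nonneg order_less_le)
    have "cmod L1 * (qj^2+ql^2) = 2*\<bar>qj^2 - ql^2\<bar> * cmod c" using m by (simp add: field_simps)
    then have cL: "cmod L1 = 2*\<bar>qj^2 - ql^2\<bar> * cmod c / (qj^2+ql^2)"
      using pos by (metis less_irrefl nonzero_mult_div_cancel_right)
    have "4*cmod a1^2 + 4*cmod a2^2 - ql^2*cmod L1^2 - qj^2*cmod L2^2
        = 4*(ql^2+qj^2)*cmod c^2 - (qj^2+ql^2) * (2*\<bar>qj^2 - ql^2\<bar> * cmod c / (qj^2+ql^2))^2"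
      using ca1 ca2 assms(6) cL by (simp add: algebra_simps power_mult_distrib)
    also have "\<dots> = 16*qj^2*ql^2*cmod c^2/(qj^2+ql^2)"
      using aux[OF pos] by simp
    finally show ?thesis using False by simp
  qed
qed

lemma pair_diag:
  fixes q :: real and d c a L :: complex
  assumes "q \<ge> 0" "Im d = 0" "q = 0 \<Longrightarrow> d = 0" "c = - cnj c" "a = d - of_real q * c"
    and "of_real ((q^2+q^2)/2) * L = a * of_real q + of_real q * cnj a"
  shows "4*cmod a^2 + 4*cmod a^2 - q^2*cmod L^2 - q^2*cmod L^2
         = (if q^2+q^2 = 0 then 0 else 16*q^2*q^2*cmod c^2/(q^2+q^2))"
proof -
  define dr where "dr = Re d"
  have dr: "d = of_real dr" using assms(2) by (simp add: complex_eq_iff dr_def)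
  have "Re c = 0" using arg_cong[OF assms(4), of Re] by simp
  define y where "y = Im c"
  have y: "c = \<i> * of_real y" using \<open>Re c = 0\<close> by (simp add: complex_eq_iff y_def)
  have "a = Complex dr (- (q*y))" using assms(5) dr y by (simp add: complex_eq_iff)
  then have ca: "cmod a^2 = dr^2 + q^2*y^2"
    by (simp only: cmod_power2 complex.sel) (simp add: power2_eq_square)
  have cc: "cmod c^2 = y^2" using y by (simp add: norm_mult)
  show ?thesis
  proof (cases "q = 0")
    case True then show ?thesis using assms(3) dr ca by simp
  next
    case False
    then have qp: "q > 0" using assms(1) by simp
    have "of_real (q^2) * L = of_real (2*q*dr)"
      using assms(5,6) dr y by (simp add: algebra_simps power2_eq_square complex_eq_iff)
    then have "L = of_real (2*dr/q)" using qp
      by (simp add: field_simps power2_eq_square)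
    then have cL: "cmod L^2 = 4*dr^2/q^2"
      by (simp only: norm_of_real power2_abs) (simp add: power_divide power_mult_distrib)
    show ?thesis using qp ca cc cL by (simp add: field_simps power2_eq_square)
  qed
qed

lemma combine:
  fixes q :: "'n::finite \<Rightarrow> real" and d :: "'n \<Rightarrow> complex"
    and a c Lm :: "'n \<Rightarrow> 'n \<Rightarrow> complex"
  assumes q0: "\<And>j. q j \<ge> 0"
    and dIm: "\<And>j. Im (d j) = 0" and d0: "\<And>j. q j = 0 \<Longrightarrow> d j = 0"
    and cs: "\<And>j l. c l j = - cnj (c j l)"
    and ad: "\<And>j l. a j l = (if j = l then d j else 0) - of_real (q l) * c j l"
    and Le: "\<And>j l. of_real ((q j^2 + q l^2)/2) * Lm j l = a j l * of_real (q l) + of_real (q j) * cnj (a l j)"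
    and Ls: "\<And>j l. Lm l j = cnj (Lm j l)"
  shows "(\<Sum>l\<in>UNIV. \<Sum>j\<in>UNIV. 4 * cmod (a j l)^2) = (\<Sum>l\<in>UNIV. q l^2 * (\<Sum>j\<in>UNIV. cmod (Lm j l)^2))
     \<longleftrightarrow> (\<forall>j l. q j^2 > 0 \<and> q l^2 > 0 \<longrightarrow> c j l = 0)"
proof -
  define A where "A j l = 4 * cmod (a j l)^2" for j l
  define B where "B j l = q l^2 * cmod (Lm j l)^2" for j l
  define F where "F j l = (if q j^2 + q l^2 = 0 then 0 else 16*q j^2*q l^2*cmod (c j l)^2/(q j^2 + q l^2))" for j l
  have S: "A j l + A l j - B j l - B l j = F j l" for j l
  proof (cases "j = l")
    case True
    have "4*cmod (a j j)^2 + 4*cmod (a j j)^2 - q j^2*cmod (Lm j j)^2 - q j^2*cmod (Lm j j)^2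
         = (if q j^2+q j^2 = 0 then 0 else 16*q j^2*q j^2*cmod (c j j)^2/(q j^2+q j^2))"
      by (rule pair_diag[OF q0 dIm d0 cs ad[of j j, simplified] Le[of j j]]) 
    then show ?thesis using True by (simp add: A_def B_def F_def)
  next
    case False
    have "4*cmod (a j l)^2 + 4*cmod (a l j)^2 - q l^2*cmod (Lm j l)^2 - q j^2*cmod (Lm l j)^2
         = (if q j^2+q l^2 = 0 then 0 else 16*q j^2*q l^2*cmod (c j l)^2/(q j^2+q l^2))"
      apply (rule pair_off[OF q0 q0 _ _ Le[of j l]])
      using False ad[of j l] ad[of l j] cs[of j l] Ls[of j l] by auto
    then show ?thesis by (simp add: A_def B_def F_def)
  qed
  have Fnn: "F j l \<ge> 0" for j l by (simp add: F_def)
  have F0: "F j l = 0 \<longleftrightarrow> \<not> (q j^2 > 0 \<and> q l^2 > 0 \<and> c j l \<noteq> 0)" for j l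
  proof -
    have "q j^2 \<ge> 0" "q l^2 \<ge> 0" by auto
    then show ?thesis by (auto simp: F_def add_nonneg_eq_0_iff)
  qed
  have swap: "(\<Sum>l\<in>UNIV. \<Sum>j\<in>UNIV. X l j) = (\<Sum>l\<in>UNIV. \<Sum>j\<in>UNIV. X j l)" for X :: "'n \<Rightarrow> 'n \<Rightarrow> real"
    by (rule sum.swap)
  have "(\<Sum>l\<in>UNIV. \<Sum>j\<in>UNIV. F j l) = (\<Sum>l\<in>UNIV. \<Sum>j\<in>UNIV. A j l + A l j - B j l - B l j)"
    using S by simp
  also have "\<dots> = (\<Sum>l\<in>UNIV. \<Sum>j\<in>UNIV. A j l) + (\<Sum>l\<in>UNIV. \<Sum>j\<in>UNIV. A l j)
       - (\<Sum>l\<in>UNIV. \<Sum>j\<in>UNIV. B j l) - (\<Sum>l\<in>UNIV. \<Sum>j\<in>UNIV. B l j)"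
    by (simp add: sum.distrib sum_subtractf)
  also have "\<dots> = 2 * ((\<Sum>l\<in>UNIV. \<Sum>j\<in>UNIV. A j l) - (\<Sum>l\<in>UNIV. \<Sum>j\<in>UNIV. B j l))"
    using swap[of A] swap[of B] by simp
  finally have tot: "(\<Sum>l\<in>UNIV. \<Sum>j\<in>UNIV. F j l) = 2 * ((\<Sum>l\<in>UNIV. \<Sum>j\<in>UNIV. A j l) - (\<Sum>l\<in>UNIV. \<Sum>j\<in>UNIV. B j l))" .
  have "(\<Sum>l\<in>UNIV. \<Sum>j\<in>UNIV. F j l) = 0 \<longleftrightarrow> (\<forall>l j. F j l = 0)"
    using Fnn by (simp add: sum_nonneg_eq_0_iff sum_nonneg)
  moreover have "(\<Sum>l\<in>UNIV. q l^2 * (\<Sum>j\<in>UNIV. cmod (Lm j l)^2)) = (\<Sum>l\<in>UNIV. \<Sum>j\<in>UNIV. B j l)"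
    by (simp add: B_def sum_distrib_left)
  ultimately show ?thesis using tot F0 unfolding A_def by auto
qed



lemma braket_self: "braket x x = of_real (\<Sum>i\<in>UNIV. cmod (x $ i)^2)"
proof -
  have e: "cnj z * z = of_real (cmod z ^2)" for z by (metis complex_norm_square mult.commute)
  show ?thesis unfolding braket_def e of_real_sum ..
qed

lemma braket_self_zero: assumes "braket x x = 0" shows "x = 0"
proof -
  have "(\<Sum>i\<in>UNIV. cmod (x $ i)^2) = 0" using assms unfolding braket_self by (simp only: of_real_eq_0_iff)
  then show ?thesis by (simp add: sum_nonneg_eq_0_iff vec_eq_iff)
qed

lemma braket_self_nonneg: "Re (braket x x) \<ge> 0"
  unfolding braket_self by (simp add: sum_nonneg)

lemma sum_mv: "(\<Sum>k\<in>S. f k) *v x = (\<Sum>k\<in>S. f k *v x)"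
  apply (simp add: vec_eq_iff matrix_vector_mult_def sum_component sum_distrib_right)
  apply (intro allI)
  apply (rule sum.swap)
  done

lemma sum_mm: "(\<Sum>k\<in>S. f k) ** M = (\<Sum>k\<in>S. f k ** M)"
  apply (simp add: vec_eq_iff matrix_matrix_mult_def sum_component sum_distrib_right)
  apply (intro allI)
  apply (rule sum.swap)
  done

lemma scaleR_mv: "(r *\<^sub>R A) *v x = r *\<^sub>R (A *v (x::complex^'n))"
  by (simp add: vec_eq_iff matrix_vector_mult_def scaleR_sum_right vector_scaleR_component)

lemma scaleR_mm: "(r *\<^sub>R A) ** M = r *\<^sub>R (A ** (M::complex^'n^'n))"
  by (simp add: vec_eq_iff matrix_matrix_mult_def scaleR_sum_right vector_scaleR_component)

lemma braket_scaleR2: "braket x (r *\<^sub>R y) = of_real r * braket x y"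
  by (simp add: braket_def sum_distrib_left) (simp add: scaleR_conv_of_real algebra_simps)

lemma vd_nth: "(f has_vector_derivative D) F \<Longrightarrow> ((\<lambda>t. f t $ i) has_vector_derivative D $ i) F"
  by (rule bounded_linear.has_vector_derivative[OF bounded_linear_vec_nth])

lemma braket_has_vd:
  assumes "(f has_vector_derivative f') (at t)" "(g has_vector_derivative g') (at t)"
  shows "((\<lambda>t. braket (f t) (g t)) has_vector_derivative (braket f' (g t) + braket (f t) g')) (at t)"
proof -
  have "((\<lambda>t. \<Sum>i\<in>UNIV. cnj (f t $ i) * g t $ i) has_vector_derivative
        (\<Sum>i\<in>UNIV. cnj (f t $ i) * g' $ i + cnj (f' $ i) * g t $ i)) (at t)"
    by (intro has_vector_derivative_sum has_vector_derivative_mult has_vector_derivative_cnj vd_nth assms)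
  then show ?thesis by (simp add: braket_def sum.distrib add.commute)
qed

lemma blin_mv: "bounded_linear (\<lambda>A::complex^'n^'n. A *v x)"
proof -
  have "linear (\<lambda>A::complex^'n^'n. A *v x)"
    by (rule linearI) (simp_all add: matrix_vector_mult_add_rdistrib scaleR_mv)
  then show ?thesis by (simp add: linear_conv_bounded_linear)
qed

lemma blin_phi: "bounded_linear (\<lambda>A::complex^'n^'n. braket u (A *v x))"
proof -
  have "linear (\<lambda>A::complex^'n^'n. braket u (A *v x))"
    by (rule linearI) (simp_all add: matrix_vector_mult_add_rdistrib scaleR_mv braket_add2 braket_scaleR2, simp add: scaleR_conv_of_real)
  then show ?thesis by (simp add: linear_conv_bounded_linear)
qed

lemma cnj_mult_self: "cnj z * z = of_real (cmod z ^2)"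
  by (metis complex_norm_square mult.commute)

lemma braket_zero1[simp]: "braket 0 y = 0" by (simp add: braket_def)
lemma braket_zero2[simp]: "braket x 0 = 0" by (simp add: braket_def)

lemma braket_has_vd_r:
  assumes "(g has_vector_derivative g') (at t)"
  shows "((\<lambda>t. braket x (g t)) has_vector_derivative braket x g') (at t)"
  using braket_has_vd[OF has_vector_derivative_const assms, of x] by simp

lemma braket_has_vd_l:
  assumes "(g has_vector_derivative g') (at t)"
  shows "((\<lambda>t. braket (g t) x) has_vector_derivative braket g' x) (at t)"
  using braket_has_vd[OF assms has_vector_derivative_const, of x] by simp



lemma mult_if: "(x::complex) * (if P then 1 else 0) = (if P then x else 0)" by simp
lemma smult_if: "(if P then 1 else 0) *s (x::complex^'n) = (if P then x else 0)" by simp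
lemma scaleR_if: "r *\<^sub>R (if P then x else 0) = (if P then r *\<^sub>R x else (0::complex^'n))" by simp
lemma mv_scaleR: "(A::complex^'n^'n) *v (r *\<^sub>R x) = r *\<^sub>R (A *v x)"
  by (simp add: vec_eq_iff matrix_vector_mult_def scaleR_sum_right vector_scaleR_component)
lemma if_mult2: "(if P then x else 0) * (y::complex) = (if P then x * y else 0)" by simp
lemma mult_if2: "(x::complex) * (if P then y else 0) = (if P then x * y else 0)" by simp

theorem lemma2:
  fixes E :: "'m::finite \<Rightarrow> real \<Rightarrow> complex^'n^'n"
    and \<Upsilon> :: "'n \<Rightarrow> real \<Rightarrow> complex^'n^'n"
    and \<psi>0 :: "complex^'n"
    and p :: "'n \<Rightarrow> real \<Rightarrow> real"
    and w :: "'n \<Rightarrow> real \<Rightarrow> complex^'n"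
    and L :: "complex^'n^'n"
    and \<theta> :: real
  assumes E_diff: "\<And>k t. E k differentiable (at t)"
    and E_kraus: "\<And>t. (\<Sum>k\<in>UNIV. adj (E k t) ** E k t) = mat 1"
    and \<Upsilon>_diff: "\<And>k t. \<Upsilon> k differentiable (at t)"
    and \<Upsilon>_kraus: "\<And>t. (\<Sum>k\<in>UNIV. adj (\<Upsilon> k t) ** \<Upsilon> k t) = mat 1"
    and same_channel: "\<And>t \<rho>. density_matrix \<rho> \<Longrightarrow>
                         kraus_apply (\<lambda>k. E k t) \<rho> = kraus_apply (\<lambda>k. \<Upsilon> k t) \<rho>"
    and \<psi>0_unit: "braket \<psi>0 \<psi>0 = 1"
    and canonical: "\<And>t j k. trace (\<Upsilon> k t ** ketbra \<psi>0 \<psi>0 ** adj (\<Upsilon> j t))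
                             = (if j = k then complex_of_real (p k t) else 0)"
    and w_orthonormal: "\<And>t j k. braket (w j t) (w k t) = (if j = k then 1 else 0)"
    and w_diff: "\<And>k t. w k differentiable (at t)"
    and w_def: "\<And>k t. p k t > 0 \<Longrightarrow>
                   w k t = (complex_of_real (1 / sqrt (p k t))) *s (\<Upsilon> k t *v \<psi>0)"
    and rho_out: "\<And>t. kraus_apply (\<lambda>k. \<Upsilon> k t) (ketbra \<psi>0 \<psi>0)
                     = (\<Sum>k\<in>UNIV. p k t *\<^sub>R ketbra (w k t) (w k t))"
    and L_sa: "adj L = L"
    and L_sld: "((\<lambda>t. kraus_apply (\<lambda>k. \<Upsilon> k t) (ketbra \<psi>0 \<psi>0)) has_vector_derivative
                  (1/2) *\<^sub>R (kraus_apply (\<lambda>k. \<Upsilon> k \<theta>) (ketbra \<psi>0 \<psi>0) ** L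
                              + L ** kraus_apply (\<lambda>k. \<Upsilon> k \<theta>) (ketbra \<psi>0 \<psi>0))) (at \<theta>)"
  shows "trace (kraus_apply (\<lambda>k. \<Upsilon> k \<theta>) (ketbra \<psi>0 \<psi>0) ** L ** L)
           = 4 * (\<Sum>k\<in>UNIV. trace (vector_derivative (\<Upsilon> k) (at \<theta>) ** ketbra \<psi>0 \<psi>0
                                     ** adj (vector_derivative (\<Upsilon> k) (at \<theta>))))
         \<longleftrightarrow> (\<forall>j k. p j \<theta> > 0 \<and> p k \<theta> > 0 \<longrightarrow>
                 braket (vector_derivative (w j) (at \<theta>)) (w k \<theta>) = 0)"
proof -
  define Ud where "Ud k = vector_derivative (\<Upsilon> k) (at \<theta>)" for k
  define wd where "wd k = vector_derivative (w k) (at \<theta>)" for k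
  define v where "v k t = \<Upsilon> k t *v \<psi>0" for k t
  define vd where "vd k = Ud k *v \<psi>0" for k
  define q where "q k = sqrt (p k \<theta>)" for k
  define a where "a j k = braket (w j \<theta>) (vd k)" for j k
  define c where "c j k = braket (wd j) (w k \<theta>)" for j k
  define Lm where "Lm j k = braket (w j \<theta>) (L *v w k \<theta>)" for j k
  define R where "R = kraus_apply (\<lambda>k. \<Upsilon> k \<theta>) (ketbra \<psi>0 \<psi>0)"
  have HU: "(\<Upsilon> k has_vector_derivative Ud k) (at \<theta>)" for k
    unfolding Ud_def using \<Upsilon>_diff vector_derivative_works by blast
  have Hw: "(w k has_vector_derivative wd k) (at \<theta>)" for k
    unfolding wd_def using w_diff vector_derivative_works by blast
  have Hv: "((\<lambda>t. v k t) has_vector_derivative vd k) (at \<theta>)" for k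
    unfolding v_def vd_def by (rule bounded_linear.has_vector_derivative[OF blin_mv HU])
  have vv: "braket (v j t) (v k t) = (if j = k then of_real (p k t) else 0)" for j k t
  proof -
    have "trace (\<Upsilon> k t ** ketbra \<psi>0 \<psi>0 ** adj (\<Upsilon> j t)) = braket (v j t) (v k t)"
      by (simp add: ketbra_mult trace_ketbra v_def)
    then show ?thesis using canonical by simp
  qed
  have pnn: "p k t \<ge> 0" for k t
    using braket_self_nonneg[of "v k t"] by (simp add: vv)
  have vw: "v k t = of_real (sqrt (p k t)) *s w k t" for k t
  proof (cases "p k t > 0")
    case True
    then have "w k t = of_real (1/sqrt(p k t)) *s v k t" using w_def v_def by simp
    then have "of_real (sqrt (p k t)) *s w k t = (of_real (sqrt (p k t)) * of_real (1/sqrt (p k t))) *s v k t"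
      by (simp add: vector_smult_assoc)
    also have "of_real (sqrt (p k t)) * of_real (1/sqrt (p k t)) = (1::complex)"
      using True by (simp flip: of_real_mult)
    finally show ?thesis by simp
  next
    case False
    then have p0: "p k t = 0" using pnn[of k t] by simp
    then have "braket (v k t) (v k t) = 0" using vv by simp
    then have "v k t = 0" by (rule braket_self_zero)
    then show ?thesis using p0 by simp
  qed
  have wv: "braket (w j t) (v k t) = (if j = k then of_real (sqrt (p k t)) else 0)" for j k t
    by (simp add: vw braket_scale2 w_orthonormal)
  have Hg: "((\<lambda>t. braket (w j t) (v k t)) has_vector_derivative (of_real (q k) * c j k + a j k)) (at \<theta>)" for j k
  proof -
    have "((\<lambda>t. braket (w j t) (v k t)) has_vector_derivative (braket (wd j) (v k \<theta>) + braket (w j \<theta>) (vd k))) (at \<theta>)"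
      by (rule braket_has_vd[OF Hw Hv])
    moreover have "braket (wd j) (v k \<theta>) = of_real (q k) * c j k" by (simp add: vw braket_scale2 c_def q_def)
    ultimately show ?thesis by (simp add: a_def)
  qed
  define d where "d k = of_real (q k) * c k k + a k k" for k
  have aoff: "a j k = - of_real (q k) * c j k" if jk: "j \<noteq> k" for j k
  proof -
    have "(\<lambda>t. braket (w j t) (v k t)) = (\<lambda>t. 0)" using wv jk by simp
    then have "((\<lambda>t. 0::complex) has_vector_derivative (of_real (q k) * c j k + a j k)) (at \<theta>)" using Hg by metis
    then have "of_real (q k) * c j k + a j k = 0"
      using has_vector_derivative_const vector_derivative_unique_at by blast
    then show ?thesis by (simp add: add_eq_0_iff)
  qed
  have ad: "a j l = (if j = l then d j else 0) - of_real (q l) * c j l" for j l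
    using aoff by (cases "j = l") (auto simp: d_def)
  have Hd: "((\<lambda>t. complex_of_real (sqrt (p k t))) has_vector_derivative d k) (at \<theta>)" for k
  proof -
    have "(\<lambda>t. braket (w k t) (v k t)) = (\<lambda>t. of_real (sqrt (p k t)))" using wv by simp
    then show ?thesis using Hg[of k k] by (simp add: d_def)
  qed
  have dIm: "Im (d k) = 0" for k
  proof -
    have "((\<lambda>t. Im (complex_of_real (sqrt (p k t)))) has_vector_derivative Im (d k)) (at \<theta>)"
      by (rule bounded_linear.has_vector_derivative[OF bounded_linear_Im Hd])
    then have "((\<lambda>t. 0::real) has_vector_derivative Im (d k)) (at \<theta>)" by simp
    then show ?thesis using has_vector_derivative_const vector_derivative_unique_at by blast
  qed
  have d0: "d k = 0" if q0: "q k = 0" for k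
  proof -
    have "((\<lambda>t. Re (complex_of_real (sqrt (p k t)))) has_vector_derivative Re (d k)) (at \<theta>)"
      by (rule bounded_linear.has_vector_derivative[OF bounded_linear_Re Hd])
    then have "((\<lambda>t. sqrt (p k t)) has_field_derivative Re (d k)) (at \<theta>)"
      by (simp add: has_real_derivative_iff_has_vector_derivative)
    then have "Re (d k) = 0"
      by (rule DERIV_local_min[where d=1]) (use q0 pnn in \<open>auto simp: q_def\<close>)
    then show ?thesis using dIm[of k] by (simp add: complex_eq_iff)
  qed
  have cs: "c l j = - cnj (c j l)" for j l
  proof -
    have "((\<lambda>t. braket (w l t) (w j t)) has_vector_derivative (braket (wd l) (w j \<theta>) + braket (w l \<theta>) (wd j))) (at \<theta>)"
      by (rule braket_has_vd[OF Hw Hw])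
    moreover have "(\<lambda>t. braket (w l t) (w j t)) = (\<lambda>t. if l = j then 1 else 0)" using w_orthonormal by simp
    ultimately have "((\<lambda>t. if l = j then 1 else 0::complex) has_vector_derivative
        (braket (wd l) (w j \<theta>) + braket (w l \<theta>) (wd j))) (at \<theta>)" by simp
    then have "braket (wd l) (w j \<theta>) + braket (w l \<theta>) (wd j) = 0"
      using has_vector_derivative_const vector_derivative_unique_at by blast
    moreover have "braket (w l \<theta>) (wd j) = cnj (c j l)" unfolding c_def by (rule braket_cnj)
    ultimately show ?thesis unfolding c_def by (simp add: add_eq_0_iff add.commute)
  qed
  have Ls: "Lm l j = cnj (Lm j l)" for j l
  proof -
    have "Lm l j = braket (L *v w l \<theta>) (w j \<theta>)" unfolding Lm_def by (subst braket_adj) (simp add: L_sa)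
    also have "\<dots> = cnj (Lm j l)" unfolding Lm_def by (rule braket_cnj)
    finally show ?thesis .
  qed
  have Rv: "R *v y = (\<Sum>k\<in>UNIV. p k \<theta> *\<^sub>R (braket (w k \<theta>) y *s w k \<theta>))" for y
    by (simp add: R_def rho_out sum_mv scaleR_mv ketbra_vec)
  have Rw: "braket (w j \<theta>) (R *v y) = of_real (p j \<theta>) * braket (w j \<theta>) y" for j y
    by (simp add: Rv braket_sum2 braket_scaleR2 braket_scale2 w_orthonormal mult_if mult_if2)
  have Rwl: "R *v w l \<theta> = p l \<theta> *\<^sub>R w l \<theta>" for l
    by (simp add: Rv w_orthonormal smult_if scaleR_if)
  have pq: "q k ^2 = p k \<theta>" for k unfolding q_def by (rule real_sqrt_pow2[OF pnn])
  have q0: "q k \<ge> 0" for k unfolding q_def by (rule real_sqrt_ge_zero[OF pnn])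
  have Le: "of_real ((q j^2 + q l^2)/2) * Lm j l = a j l * of_real (q l) + of_real (q j) * cnj (a l j)" for j l
  proof -
    define \<Phi> where "\<Phi> X = braket (w j \<theta>) (X *v w l \<theta>)" for X
    have D1: "((\<lambda>t. \<Phi> (kraus_apply (\<lambda>k. \<Upsilon> k t) (ketbra \<psi>0 \<psi>0))) has_vector_derivative
              \<Phi> ((1/2) *\<^sub>R (R ** L + L ** R))) (at \<theta>)"
      unfolding \<Phi>_def R_def by (rule bounded_linear.has_vector_derivative[OF blin_phi L_sld])
    have V1: "\<Phi> ((1/2) *\<^sub>R (R ** L + L ** R)) = of_real ((p j \<theta> + p l \<theta>)/2) * Lm j l"
      by (simp add: \<Phi>_def scaleR_mv matrix_vector_mult_add_rdistrib braket_scaleR2 braket_add2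
          matrix_vector_mul_assoc[symmetric] Rw Rwl mv_scaleR Lm_def algebra_simps)
    have fe: "(\<lambda>t. \<Phi> (kraus_apply (\<lambda>k. \<Upsilon> k t) (ketbra \<psi>0 \<psi>0)))
        = (\<lambda>t. \<Sum>k\<in>UNIV. braket (w j \<theta>) (v k t) * braket (v k t) (w l \<theta>))"
      by (simp add: \<Phi>_def kraus_apply_def ketbra_mult sum_mv ketbra_vec braket_sum2 braket_scale2 v_def mult.commute)
    have D2: "((\<lambda>t. \<Sum>k\<in>UNIV. braket (w j \<theta>) (v k t) * braket (v k t) (w l \<theta>)) has_vector_derivative
       (\<Sum>k\<in>UNIV. braket (w j \<theta>) (v k \<theta>) * braket (vd k) (w l \<theta>) + braket (w j \<theta>) (vd k) * braket (v k \<theta>) (w l \<theta>))) (at \<theta>)"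
      by (intro has_vector_derivative_sum has_vector_derivative_mult braket_has_vd_r braket_has_vd_l Hv)
    have bl: "braket (v k \<theta>) (w l \<theta>) = (if l = k then of_real (q k) else 0)" for k
      by (simp add: braket_cnj[of "v k \<theta>" "w l \<theta>"] wv q_def)
    have bd: "braket (vd k) (w l \<theta>) = cnj (a l k)" for k
      unfolding a_def by (rule braket_cnj)
    have V2: "(\<Sum>k\<in>UNIV. braket (w j \<theta>) (v k \<theta>) * braket (vd k) (w l \<theta>) + braket (w j \<theta>) (vd k) * braket (v k \<theta>) (w l \<theta>))
        = a j l * of_real (q l) + of_real (q j) * cnj (a l j)"
    proof -
      have wv': "braket (w j \<theta>) (v k \<theta>) = (if j = k then of_real (q k) else 0)" for k
        by (simp add: wv q_def)
      have "(\<Sum>k\<in>UNIV. braket (w j \<theta>) (v k \<theta>) * braket (vd k) (w l \<theta>) + braket (w j \<theta>) (vd k) * braket (v k \<theta>) (w l \<theta>))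
        = (\<Sum>k\<in>UNIV. (if j = k then of_real (q k) * cnj (a l k) else 0)) + (\<Sum>k\<in>UNIV. (if l = k then a j k * of_real (q k) else 0))"
        by (simp only: wv' bl bd a_def[symmetric] if_mult2 mult_if2 sum.distrib)
      also have "\<dots> = of_real (q j) * cnj (a l j) + a j l * of_real (q l)" by simp
      finally show ?thesis by (simp add: add.commute)
    qed
    have D2': "((\<lambda>t. \<Phi> (kraus_apply (\<lambda>k. \<Upsilon> k t) (ketbra \<psi>0 \<psi>0))) has_vector_derivative
        (a j l * of_real (q l) + of_real (q j) * cnj (a l j))) (at \<theta>)"
      unfolding fe V2[symmetric] by (rule D2)
    have "\<Phi> ((1/2) *\<^sub>R (R ** L + L ** R)) = a j l * of_real (q l) + of_real (q j) * cnj (a l j)"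
      by (rule vector_derivative_unique_at[OF D1 D2'])
    then show ?thesis using V1 pq by simp
  qed
  have Cval: "trace (Ud k ** ketbra \<psi>0 \<psi>0 ** adj (Ud k)) = of_real (\<Sum>j\<in>UNIV. cmod (a j k)^2)" for k
  proof -
    have "trace (Ud k ** ketbra \<psi>0 \<psi>0 ** adj (Ud k)) = braket (vd k) (vd k)"
      by (simp add: ketbra_mult trace_ketbra vd_def)
    also have "\<dots> = (\<Sum>j\<in>UNIV. cnj (a j k) * a j k)" unfolding a_def by (rule parseval[OF w_orthonormal])
    also have "\<dots> = of_real (\<Sum>j\<in>UNIV. cmod (a j k)^2)" by (simp add: cnj_mult_self)
    finally show ?thesis .
  qed
  have tk: "trace (ketbra (w k \<theta>) (w k \<theta>) ** L ** L) = of_real (\<Sum>j\<in>UNIV. cmod (Lm j k)^2)" for k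
  proof -
    have "trace (ketbra (w k \<theta>) (w k \<theta>) ** L ** L) = braket (L *v (L *v w k \<theta>)) (w k \<theta>)"
      by (simp add: ketbra_mmult L_sa trace_ketbra)
    also have "\<dots> = cnj (braket (w k \<theta>) (L *v (L *v w k \<theta>)))" by (rule braket_cnj)
    also have "braket (w k \<theta>) (L *v (L *v w k \<theta>)) = braket (L *v w k \<theta>) (L *v w k \<theta>)"
      by (subst braket_adj) (simp add: L_sa)
    also have "\<dots> = (\<Sum>j\<in>UNIV. cnj (Lm j k) * Lm j k)" unfolding Lm_def by (rule parseval[OF w_orthonormal])
    also have "\<dots> = of_real (\<Sum>j\<in>UNIV. cmod (Lm j k)^2)" by (simp add: cnj_mult_self)
    finally show ?thesis by simp
  qed
  have Hval: "trace (R ** L ** L) = of_real (\<Sum>l\<in>UNIV. q l^2 * (\<Sum>j\<in>UNIV. cmod (Lm j l)^2))"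
    by (simp add: R_def rho_out sum_mm scaleR_mm trace_sum trace_scaleR tk pq)
  have Cval2: "4 * (\<Sum>k\<in>UNIV. trace (Ud k ** ketbra \<psi>0 \<psi>0 ** adj (Ud k)))
      = of_real (\<Sum>l\<in>UNIV. \<Sum>j\<in>UNIV. 4 * cmod (a j l)^2)"
    by (simp add: Cval sum_distrib_left)
  have main: "trace (R ** L ** L) = 4 * (\<Sum>k\<in>UNIV. trace (Ud k ** ketbra \<psi>0 \<psi>0 ** adj (Ud k)))
      \<longleftrightarrow> (\<forall>j k. p j \<theta> > 0 \<and> p k \<theta> > 0 \<longrightarrow> braket (wd j) (w k \<theta>) = 0)"
  proof -
    have "trace (R ** L ** L) = 4 * (\<Sum>k\<in>UNIV. trace (Ud k ** ketbra \<psi>0 \<psi>0 ** adj (Ud k)))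
       \<longleftrightarrow> (\<Sum>l\<in>UNIV. q l^2 * (\<Sum>j\<in>UNIV. cmod (Lm j l)^2)) = (\<Sum>l\<in>UNIV. \<Sum>j\<in>UNIV. 4 * cmod (a j l)^2)"
      unfolding Hval Cval2 of_real_eq_iff ..
    also have "\<dots> \<longleftrightarrow> (\<Sum>l\<in>UNIV. \<Sum>j\<in>UNIV. 4 * cmod (a j l)^2) = (\<Sum>l\<in>UNIV. q l^2 * (\<Sum>j\<in>UNIV. cmod (Lm j l)^2))"
      by (rule eq_commute)
    also have "\<dots> \<longleftrightarrow> (\<forall>j l. q j^2 > 0 \<and> q l^2 > 0 \<longrightarrow> c j l = 0)"
      by (rule combine[OF q0 dIm d0 cs ad Le Ls])
    also have "\<dots> \<longleftrightarrow> (\<forall>j k. p j \<theta> > 0 \<and> p k \<theta> > 0 \<longrightarrow> braket (wd j) (w k \<theta>) = 0)"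
      by (simp add: pq c_def)
    finally show ?thesis .
  qed
  show ?thesis using main unfolding R_def Ud_def wd_def .
qed


end
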